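(* Let $\lambda_a,\lambda_b\in\{1,2\}$ and let $u,t,v,w$ be integers such that $(u,t)$ satisfies $S_{\lambda_a,\lambda_b}$ and $u\cdot(vw)=t^3+t^{\lambda_a}+1$ (i.e. $u,t,vw$ are, in that order, three consecutive terms of $\langle u,t\rangle_{S_{\lambda_a,\lambda_b}}=\langle t,vw\rangle_{S_{3-\lambda_b,\lambda_a}}$). Then $(v,t)$ satisfies $S_{\lambda_a,\lambda_b}$ (i.e. $v,t,uw$ are, in that order, three consecutive terms of $\langle v,t\rangle_{S_{\lambda_a,\lambda_b}}=\langle t,uw\rangle_{S_{3-\lambda_b,\lambda_a}}$) if and only if $$t\mid (u-v)(u^2+uv+v^2+1)\quad\text{when }\lambda_b=1,$$ $$t\mid (u-v)\big((uw)^2+(uw)(vw)+(vw)^2+1\big)\quad\text{when }\lambda_b=2.$$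
   Context: For $\lambda_a,\lambda_b\in\{1,2\}$, a pair of integers $(x,y)$ satisfies the system $S_{\lambda_a,\lambda_b}$ if $x\mid y^3+y^{\lambda_a}+1$ and $y\mid x^3+x^{\lambda_b}+1$. For such a pair, $\langle x,y\rangle_{S_{\lambda_a,\lambda_b}}$ denotes the bi-infinite integer sequence $(u_n)$ with $u_0=x$, $u_1=y$ and $u_{n-1}u_{n+1}=u_n^3+u_n^{e_n}+1$ for all $n$, where $e_n$ has period 4 with $(e_0,e_1,e_2,e_3)=(\lambda_b,\lambda_a,3-\lambda_b,3-\lambda_a)$; sequences are identified up to shift and reversal of indices. "$u,t,s$, in that order, are three consecutive terms of $\langle u,t\rangle_{S_{\lambda_a,\lambda_b}}$" means $(u,t)$ satisfies $S_{\lambda_a,\lambda_b}$ and $us=t^3+t^{\lambda_a}+1$; then $(t,s)$ satisfies $S_{3-\lambda_b,\lambda_a}$. *)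

theory Defs
  imports Main
begin

definition satisfies_S :: "nat \<Rightarrow> nat \<Rightarrow> int \<Rightarrow> int \<Rightarrow> bool" where
  "satisfies_S la lb x y \<longleftrightarrow> x dvd y ^ 3 + y ^ la + 1 \<and> y dvd x ^ 3 + x ^ lb + 1"

end

theory Submission
  imports Defs
begin

theorem theorem11:
  fixes la lb :: nat and u t v w :: int
  assumes "la \<in> {1, 2}" and "lb \<in> {1, 2}"
    and "satisfies_S la lb u t"
    and "u * (v * w) = t ^ 3 + t ^ la + 1"
  shows "satisfies_S la lb v t \<longleftrightarrow>
    (if lb = 1 then t dvd (u - v) * (u ^ 2 + u * v + v ^ 2 + 1)
     else t dvd (u - v) * ((u * w) ^ 2 + (u * w) * (v * w) + (v * w) ^ 2 + 1))"
proof -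
  have vd: "v dvd t ^ 3 + t ^ la + 1" using assms(4) by (metis dvd_triv_left mult.left_commute)
  have tu: "t dvd u ^ 3 + u ^ lb + 1" using assms(3) by (simp add: satisfies_S_def)
  define m where "m = t^2 + t^(la - 1)"
  have tla: "t ^ la = t * t^(la-1)" using assms(1) by (auto simp: power2_eq_square)
  have e: "u * v * w = 1 + t * m" using assms(4) tla by (simp add: m_def algebra_simps power3_eq_cube power2_eq_square)
  have cop: "coprime t (u * v)"
  proof (rule coprimeI)
    fix c assume "c dvd t" "c dvd u * v"
    then have "c dvd u * v * w - t * m" by simp
    then show "is_unit c" using e by simp
  qed
  have cop3: "coprime t (u^3)" using cop by simp
  have cop2: "coprime t (u^2 * v^2)" using cop by (simp add: power_mult_distrib[symmetric])
  have L: "satisfies_S la lb v t \<longleftrightarrow> t dvd v ^ 3 + v ^ lb + 1"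
    using vd by (simp add: satisfies_S_def)
  show ?thesis
  proof (cases "lb = 1")
    case True
    have id: "(u - v) * (u ^ 2 + u * v + v ^ 2 + 1) = (u^3+u+1) - (v^3+v+1)"
      by (simp add: algebra_simps power3_eq_cube power2_eq_square)
    have "t dvd (u^3+u+1) - (v^3+v+1) \<longleftrightarrow> t dvd v^3+v+1"
    proof
      have tA: "t dvd u^3+u+1" using tu True by simp
      assume "t dvd (u^3+u+1) - (v^3+v+1)"
      then have "t dvd (u^3+u+1) - ((u^3+u+1) - (v^3+v+1))" using tA dvd_diff by blast
      then show "t dvd v^3+v+1" by (simp add: add.commute)
    next
      have tA: "t dvd u^3+u+1" using tu True by simp
      assume "t dvd v^3+v+1"
      then show "t dvd (u^3+u+1) - (v^3+v+1)" using tA dvd_diff by blast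
    qed
    then show ?thesis using L True id by simp
  next
    case False
    then have lb: "lb = 2" using assms(2) by auto
    define X where "X = (u - v) * ((u * w) ^ 2 + (u * w) * (v * w) + (v * w) ^ 2 + 1)"
    define A where "A = u^3+u^2+1"
    define B where "B = v^3+v^2+1"
    have id: "u^2*v^2*X = u^3*B + (t*((2*m + t*m^2)*(u^3-v^3)) - v^3*A)"
    proof -
      have "u^2*v^2*X = (u*v*w)^2*(u^3-v^3) + u^2*v^2*(u-v)"
        by (simp add: X_def algebra_simps power3_eq_cube power2_eq_square)
      also have "\<dots> = (1+t*m)^2*(u^3-v^3) + u^2*v^2*(u-v)" using e by simp
      also have "\<dots> = u^3*B + (t*((2*m + t*m^2)*(u^3-v^3)) - v^3*A)"
        by (simp add: A_def B_def algebra_simps power3_eq_cube power2_eq_square)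
      finally show ?thesis .
    qed
    have tA: "t dvd A" using tu lb by (simp add: A_def)
    have "t dvd X \<longleftrightarrow> t dvd u^2*v^2*X" using cop2 by (simp add: coprime_dvd_mult_right_iff)
    also have "\<dots> \<longleftrightarrow> t dvd u^3*B"
    proof -
      have "t dvd (t*((2*m + t*m^2)*(u^3-v^3)) - v^3*A)" using tA by simp
      then show ?thesis unfolding id
        by (simp add: dvd_add_left_iff)
    qed
    also have "\<dots> \<longleftrightarrow> t dvd B" using cop3 by (simp add: coprime_dvd_mult_right_iff)
    finally show ?thesis using L lb by (simp add: X_def B_def)
  qed
qed

end
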